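(* Let $G=(V,E)$ be a graph. If $|V|=1$, the single vertex of $G$ is a forced codeword. If $|V|\ge 2$, then a vertex $u\in V$ is a forced codeword if and only if there exists a vertex $v\in V$ with $v\ne u$ and $N(u)\subseteq N[v]$.
   Context: All graphs are finite, simple and undirected (not necessarily connected). For $u\in V$, $N(u)$ is the set of neighbours of $u$ and $N[u]=N(u)\cup\{u\}$. A code is a non-empty subset $C\subseteq V$. For $u\in V$, $I(C;u)=N[u]\cap C$. A code $C$ is self-locating-dominating if for every $u\in V\setminus C$ we have $I(C;u)\neq\emptyset$ and $\bigcap_{c\in I(C;u)}N[c]=\{u\}$. A vertex $u$ is a forced codeword if $u$ belongs to every self-locating-dominating code of $G$. *)

theory Defs
  imports Main
begin

definition graph :: "'a set \<Rightarrow> ('a \<Rightarrow> 'a \<Rightarrow> bool) \<Rightarrow> bool" where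
  "graph V E \<longleftrightarrow> finite V \<and> (\<forall>x y. E x y \<longrightarrow> x \<in> V \<and> y \<in> V)
     \<and> (\<forall>x. \<not> E x x) \<and> (\<forall>x y. E x y \<longrightarrow> E y x)"

definition nbh :: "'a set \<Rightarrow> ('a \<Rightarrow> 'a \<Rightarrow> bool) \<Rightarrow> 'a \<Rightarrow> 'a set" where
  "nbh V E u = {v \<in> V. E u v}"

definition cnbh :: "'a set \<Rightarrow> ('a \<Rightarrow> 'a \<Rightarrow> bool) \<Rightarrow> 'a \<Rightarrow> 'a set" where
  "cnbh V E u = insert u (nbh V E u)"

definition I_set :: "'a set \<Rightarrow> ('a \<Rightarrow> 'a \<Rightarrow> bool) \<Rightarrow> 'a set \<Rightarrow> 'a \<Rightarrow> 'a set" where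
  "I_set V E C u = cnbh V E u \<inter> C"

definition self_loc_dom :: "'a set \<Rightarrow> ('a \<Rightarrow> 'a \<Rightarrow> bool) \<Rightarrow> 'a set \<Rightarrow> bool" where
  "self_loc_dom V E C \<longleftrightarrow> C \<noteq> {} \<and> C \<subseteq> V \<and>
     (\<forall>u \<in> V - C. I_set V E C u \<noteq> {} \<and>
        (\<Inter>c \<in> I_set V E C u. cnbh V E c) = {u})"

definition forced_codeword :: "'a set \<Rightarrow> ('a \<Rightarrow> 'a \<Rightarrow> bool) \<Rightarrow> 'a \<Rightarrow> bool" where
  "forced_codeword V E u \<longleftrightarrow> (\<forall>C. self_loc_dom V E C \<longrightarrow> u \<in> C)"

end

theory Submission
  imports Defs
begin

lemma cnbh_sym:
  assumes g: "graph V E" and "x \<in> V" and "y \<in> V"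
  shows "x \<in> cnbh V E y \<longleftrightarrow> y \<in> cnbh V E x"
  using assms unfolding graph_def cnbh_def nbh_def by blast

lemma forward:
  assumes g: "graph V E" and u: "u \<in> V" and v: "v \<in> V" "v \<noteq> u"
    and sub: "nbh V E u \<subseteq> cnbh V E v"
  shows "forced_codeword V E u"
  unfolding forced_codeword_def
proof (intro allI impI, rule ccontr)
  fix C assume s: "self_loc_dom V E C" and uC: "u \<notin> C"
  hence CV: "C \<subseteq> V" and ne: "I_set V E C u \<noteq> {}"
    and eq: "(\<Inter>c \<in> I_set V E C u. cnbh V E c) = {u}"
    using u unfolding self_loc_dom_def by auto
  have "v \<in> (\<Inter>c \<in> I_set V E C u. cnbh V E c)"
  proof
    fix c assume c: "c \<in> I_set V E C u"
    then have "c \<in> nbh V E u" using uC unfolding I_set_def cnbh_def by auto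
    then have "c \<in> cnbh V E v" using sub by auto
    moreover have "c \<in> V" using c CV unfolding I_set_def by auto
    ultimately show "v \<in> cnbh V E c" using cnbh_sym[OF g _ v(1)] by blast
  qed
  then show False using eq v by auto
qed

lemma backward:
  assumes g: "graph V E" and u: "u \<in> V" and c2: "card V \<ge> 2"
    and f: "forced_codeword V E u"
  shows "\<exists>v \<in> V. v \<noteq> u \<and> nbh V E u \<subseteq> cnbh V E v"
proof (rule ccontr)
  assume H: "\<not> ?thesis"
  have fin: "finite V" using g unfolding graph_def by auto
  have "V - {u} \<noteq> {}"
  proof
    assume "V - {u} = {}"
    then have "V \<subseteq> {u}" by auto
    then have "card V \<le> 1" using card_mono[of "{u}" V] by simp
    then show False using c2 by auto
  qed
  then obtain w where w: "w \<in> V" "w \<noteq> u" by auto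
  have Nne: "nbh V E u \<noteq> {}"
  proof
    assume "nbh V E u = {}"
    then show False using H w by auto
  qed
  have Iu: "I_set V E (V - {u}) u = nbh V E u"
    unfolding I_set_def cnbh_def nbh_def using g unfolding graph_def by auto
  have "self_loc_dom V E (V - {u})"
    unfolding self_loc_dom_def
  proof (intro conjI)
    show "V - {u} \<noteq> {}" by fact
    show "V - {u} \<subseteq> V" by auto
    show "\<forall>x\<in>V - (V - {u}). I_set V E (V - {u}) x \<noteq> {} \<and>
        (\<Inter>c\<in>I_set V E (V - {u}) x. cnbh V E c) = {x}"
    proof
      fix x assume "x \<in> V - (V - {u})"
      then have xu: "x = u" by auto
      have "(\<Inter>c\<in>nbh V E u. cnbh V E c) = {u}"
      proof
        show "{u} \<subseteq> (\<Inter>c\<in>nbh V E u. cnbh V E c)"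
          using g unfolding graph_def nbh_def cnbh_def by auto
        show "(\<Inter>c\<in>nbh V E u. cnbh V E c) \<subseteq> {u}"
        proof
          fix y assume y: "y \<in> (\<Inter>c\<in>nbh V E u. cnbh V E c)"
          obtain c where c: "c \<in> nbh V E u" using Nne by auto
          have yV: "y \<in> V" using y c g unfolding graph_def nbh_def cnbh_def by auto
          have "nbh V E u \<subseteq> cnbh V E y"
          proof
            fix d assume d: "d \<in> nbh V E u"
            then have "y \<in> cnbh V E d" using y by auto
            moreover have "d \<in> V" using d unfolding nbh_def by auto
            ultimately show "d \<in> cnbh V E y" using cnbh_sym[OF g _ yV] by blast
          qed
          then show "y \<in> {u}" using H yV by auto
        qed
      qed
      then show "I_set V E (V - {u}) x \<noteq> {} \<and>
        (\<Inter>c\<in>I_set V E (V - {u}) x. cnbh V E c) = {x}"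
        using Iu Nne xu by auto
    qed
  qed
  then show False using f unfolding forced_codeword_def by auto
qed

theorem mainTheorem3:
  assumes "graph V E"
  shows "(card V = 1 \<longrightarrow> (\<forall>u \<in> V. forced_codeword V E u))
    \<and> (card V \<ge> 2 \<longrightarrow> (\<forall>u \<in> V. forced_codeword V E u \<longleftrightarrow>
          (\<exists>v \<in> V. v \<noteq> u \<and> nbh V E u \<subseteq> cnbh V E v)))"
proof (intro conjI impI ballI)
  fix u assume c1: "card V = 1" and u: "u \<in> V"
  then have "V = {u}" by (metis card_1_singletonE singletonD)
  then show "forced_codeword V E u"
    unfolding forced_codeword_def self_loc_dom_def by auto
next
  fix u assume "card V \<ge> 2" "u \<in> V"
  then show "forced_codeword V E u \<longleftrightarrow> (\<exists>v \<in> V. v \<noteq> u \<and> nbh V E u \<subseteq> cnbh V E v)"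
    using forward[OF assms] backward[OF assms] by blast
qed

end
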